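(* Let $n\geq 4$ and let $\tau: T_n\to \mathrm{GL}_{n+1}(\mathbb{C})$ be a homogeneous $3$-local representation of the twin group $T_n$. Then $\tau$ is equivalent to one of the eleven representations $\tau_j$, $1\leq j\leq 11$, defined by $\tau_j(s_i)=\mathrm{diag}(I_{i-1},M_j,I_{n-i-1})$ for all $1\leq i\leq n-1$, where (1) $M_1=\begin{pmatrix}1&0&0\\ d&-1&f\\ 0&0&1\end{pmatrix}$, with $d,f\in\mathbb{C}$; (2) $M_2=\begin{pmatrix}1&0&0\\ 0&-\sqrt{1-fh}&f\\ 0&h&\sqrt{1-fh}\end{pmatrix}$, with $h,f\in\mathbb{C}$; (3) $M_3=\begin{pmatrix}1&0&0\\ 0&\sqrt{1-fh}&f\\ 0&h&-\sqrt{1-fh}\end{pmatrix}$, with $h,f\in\mathbb{C}$; (4) $M_4=\begin{pmatrix}1&b&0\\ 0&-1&0\\ 0&h&1\end{pmatrix}$, with $b,h\in\mathbb{C}$; (5) $M_5=\begin{pmatrix}-\sqrt{1-bd}&b&0\\ d&\sqrt{1-bd}&0\\ 0&0&1\end{pmatrix}$, with $b,d\in\mathbb{C}$; (6) $M_6=\begin{pmatrix}\sqrt{1-bd}&b&0\\ d&-\sqrt{1-bd}&0\\ 0&0&1\end{pmatrix}$, with $b,d\in\mathbb{C}$; (7) $M_7=\mathrm{diag}(1,-1,-1)$; (8) $M_8=\mathrm{diag}(-1,-1,1)$; (9) $M_9=\mathrm{diag}(1,1,1)$; (10) $M_{10}=\mathrm{diag}(-1,-1,-1)$; (11) $M_{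11}=\mathrm{diag}(-1,1,-1)$.
   Context: The twin group $T_n$ ($n\geq 2$) is the group with generators $s_1,\dots,s_{n-1}$ and defining relations $s_i^2=1$ for $1\leq i\leq n-1$ and $s_is_j=s_js_i$ for $|i-j|\geq 2$. A representation $\tau:T_n\to\mathrm{GL}_{n+1}(\mathbb{C})$ is called homogeneous $3$-local if there is a single matrix $M\in\mathrm{GL}_3(\mathbb{C})$ such that $\tau(s_i)=\mathrm{diag}(I_{i-1},M,I_{n-i-1})$ (block-diagonal, with $I_r$ the $r\times r$ identity) for all $1\leq i\leq n-1$. For a complex number $z$, $\sqrt{z}$ denotes a fixed choice of square root. Two representations are equivalent if they are conjugate by an invertible matrix. *)

theory Defs
  imports Complex_Main "Jordan_Normal_Form.Matrix"
begin

text \<open>The (n+1)x(n+1) matrix diag(I_{i-1}, M, I_{n-i-1}) for a 3x3 matrix M and 1 <= i <= n-1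
  (rows/columns are 0-indexed, so the block M occupies indices i-1, i, i+1).\<close>
definition local_mat :: "nat \<Rightarrow> complex mat \<Rightarrow> nat \<Rightarrow> complex mat" where
  "local_mat n M i = mat (n+1) (n+1) (\<lambda>(r,c).
     if i - 1 \<le> r \<and> r \<le> i + 1 \<and> i - 1 \<le> c \<and> c \<le> i + 1
     then M $$ (r - (i - 1), c - (i - 1))
     else (if r = c then 1 else 0))"

text \<open>An assignment s_i |-> A i (1 <= i <= n-1) of (n+1)x(n+1) invertible matrices extends to a
  representation of the twin group T_n iff the defining relations of T_n hold.\<close>
definition twin_rep :: "nat \<Rightarrow> (nat \<Rightarrow> complex mat) \<Rightarrow> bool" where
  "twin_rep n A \<longleftrightarrow>
     (\<forall>i\<in>{1..n-1}. A i \<in> carrier_mat (n+1) (n+1) \<and> invertible_mat (A i)) \<and>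
     (\<forall>i\<in>{1..n-1}. A i * A i = 1\<^sub>m (n+1)) \<and>
     (\<forall>i\<in>{1..n-1}. \<forall>j\<in>{1..n-1}. (i + 2 \<le> j \<or> j + 2 \<le> i) \<longrightarrow> A i * A j = A j * A i)"

definition homog_3local_rep :: "nat \<Rightarrow> complex mat \<Rightarrow> bool" where
  "homog_3local_rep n M \<longleftrightarrow> M \<in> carrier_mat 3 3 \<and> invertible_mat M \<and> twin_rep n (local_mat n M)"

text \<open>The eleven matrices M_1, ..., M_11 (with two complex parameters x y; unused for 7..11).
  The square root is the fixed choice csqrt.\<close>
definition twinM :: "nat \<Rightarrow> complex \<Rightarrow> complex \<Rightarrow> complex mat" where
  "twinM j x y = (
     if j = 1 then (let d = x; f = y in mat_of_rows_list 3 [[1,0,0],[d,-1,f],[0,0,1]])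
     else if j = 2 then (let h = x; f = y in
       mat_of_rows_list 3 [[1,0,0],[0,- csqrt (1 - f*h),f],[0,h,csqrt (1 - f*h)]])
     else if j = 3 then (let h = x; f = y in
       mat_of_rows_list 3 [[1,0,0],[0,csqrt (1 - f*h),f],[0,h,- csqrt (1 - f*h)]])
     else if j = 4 then (let b = x; h = y in mat_of_rows_list 3 [[1,b,0],[0,-1,0],[0,h,1]])
     else if j = 5 then (let b = x; d = y in
       mat_of_rows_list 3 [[- csqrt (1 - b*d),b,0],[d,csqrt (1 - b*d),0],[0,0,1]])
     else if j = 6 then (let b = x; d = y in
       mat_of_rows_list 3 [[csqrt (1 - b*d),b,0],[d,- csqrt (1 - b*d),0],[0,0,1]])
     else if j = 7 then mat_of_rows_list 3 [[1,0,0],[0,-1,0],[0,0,-1]]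
     else if j = 8 then mat_of_rows_list 3 [[-1,0,0],[0,-1,0],[0,0,1]]
     else if j = 9 then mat_of_rows_list 3 [[1,0,0],[0,1,0],[0,0,1]]
     else if j = 10 then mat_of_rows_list 3 [[-1,0,0],[0,-1,0],[0,0,-1]]
     else mat_of_rows_list 3 [[-1,0,0],[0,1,0],[0,0,-1]])"

end

theory Submission
  imports Defs
begin

lemma prod_entry5:
  assumes "r < 5" "c < n+1" "4 \<le> n"
    "A \<in> carrier_mat (n+1) (n+1)" "B \<in> carrier_mat (n+1) (n+1)"
    "\<And>k. 5 \<le> k \<Longrightarrow> k < n+1 \<Longrightarrow> A $$ (r,k) = 0"
  shows "(A*B) $$ (r,c) = (\<Sum>k<5. A $$ (r,k) * B $$ (k,c))"
proof -
  have "(A*B) $$ (r,c) = (\<Sum>k\<in>{0..<n+1}. A $$ (r,k) * B $$ (k,c))"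
    using assms by (simp add: scalar_prod_def)
  also have "\<dots> = (\<Sum>k\<in>{0..<5}. A $$ (r,k) * B $$ (k,c))"
    apply (rule sum.mono_neutral_right)
      apply simp
    using assms(3) apply (force simp: subset_iff)
    using assms(6) by auto
  finally show ?thesis by (simp add: atLeast0LessThan)
qed

lemma lm_entry:
  assumes "r < n+1" "c < n+1"
  shows "local_mat n M i $$ (r,c) = (if i - 1 \<le> r \<and> r \<le> i + 1 \<and> i - 1 \<le> c \<and> c \<le> i + 1
     then M $$ (r - (i - 1), c - (i - 1))
     else (if r = c then 1 else 0))"
  using assms by (simp add: local_mat_def)

lemma lm_carrier: "local_mat n M i \<in> carrier_mat (n+1) (n+1)"
  by (simp add: local_mat_def)

lemma mat3_eq:
  assumes "M \<in> carrier_mat 3 3"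
  shows "M = mat_of_rows_list 3 [[M$$(0,0),M$$(0,1),M$$(0,2)],[M$$(1,0),M$$(1,1),M$$(1,2)],[M$$(2,0),M$$(2,1),M$$(2,2)]]"
proof (rule eq_matI)
  fix i j assume "i < dim_row (mat_of_rows_list 3 [[M$$(0,0),M$$(0,1),M$$(0,2)],[M$$(1,0),M$$(1,1),M$$(1,2)],[M$$(2,0),M$$(2,1),M$$(2,2)]])"
    "j < dim_col (mat_of_rows_list 3 [[M$$(0,0),M$$(0,1),M$$(0,2)],[M$$(1,0),M$$(1,1),M$$(1,2)],[M$$(2,0),M$$(2,1),M$$(2,2)]])"
  then have "i < 3" "j < 3" by (auto simp: mat_of_rows_list_def)
  then show "M $$ (i,j) = mat_of_rows_list 3 [[M$$(0,0),M$$(0,1),M$$(0,2)],[M$$(1,0),M$$(1,1),M$$(1,2)],[M$$(2,0),M$$(2,1),M$$(2,2)]] $$ (i,j)"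
    by (auto simp: mat_of_rows_list_def less_Suc_eq numeral_eq_Suc)
qed (use assms in \<open>auto simp: mat_of_rows_list_def\<close>)


lemma sum5: "(\<Sum>k<5. (f::nat\<Rightarrow>complex) k) = f 0 + f 1 + f 2 + f 3 + (f 4 :: complex)"
  by (simp add: eval_nat_numeral)

lemma eqs:
  assumes "n \<ge> 4" "homog_3local_rep n M"
  defines "a \<equiv> M$$(0,0)" and "b \<equiv> M$$(0,1)" and "c \<equiv> M$$(0,2)"
     and "d \<equiv> M$$(1,0)" and "e \<equiv> M$$(1,1)" and "f \<equiv> M$$(1,2)"
     and "g \<equiv> M$$(2,0)" and "h \<equiv> M$$(2,1)" and "k \<equiv> M$$(2,2)"
  shows "c = 0 \<and> g = 0 \<and> f*a = f \<and> f*b = 0 \<and> h = a*h \<and> k*b = b \<and> d*h = 0 \<and> d = d*k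
    \<and> a*a+b*d+c*g = 1 \<and> a*b+b*e+c*h = 0 \<and> a*c+b*f+c*k = 0
    \<and> d*a+e*d+f*g = 0 \<and> d*b+e*e+f*h = 1 \<and> d*c+e*f+f*k = 0
    \<and> g*a+h*d+k*g = 0 \<and> g*b+h*e+k*h = 0 \<and> g*c+h*f+k*k = 1"
proof -
  let ?A = "local_mat n M 1" and ?B = "local_mat n M 3"
  have tw: "twin_rep n (local_mat n M)" using assms(2) by (simp add: homog_3local_rep_def)
  have i13: "1 \<in> {1..n-1}" "3 \<in> {1..n-1}" using assms(1) by auto
  have comm: "?A * ?B = ?B * ?A" using tw i13 unfolding twin_rep_def by auto
  have sq: "?A * ?A = 1\<^sub>m (n+1)" using tw i13 unfolding twin_rep_def by auto
  have z: "local_mat n M i $$ (r,q) = 0" if "i \<in> {1,3}" "r < 5" "5 \<le> q" "q < n+1" for i r q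
    using that by (auto simp: lm_entry)
  have PE: "(local_mat n M i * local_mat n M j) $$ (r,s) = (\<Sum>q<5. local_mat n M i $$ (r,q) * local_mat n M j $$ (q,s))"
    if "i \<in> {1,3}" "r < 5" "s < 5" for i j r s
    by (rule prod_entry5[OF that(2) _ assms(1) lm_carrier lm_carrier]) (use that assms(1) z in auto)
  have E: "(\<Sum>q<5. ?A $$ (r,q) * ?B $$ (q,s)) = (\<Sum>q<5. ?B $$ (r,q) * ?A $$ (q,s))" if "r<5" "s<5" for r s
    using PE[of 1 r s 3] PE[of 3 r s 1] comm that by simp
  have F: "(\<Sum>q<5. ?A $$ (r,q) * ?A $$ (q,s)) = (if r = s then 1 else 0)" if "r<5" "s<5" for r s
    using PE[of 1 r s 1] sq that assms(1) by simp
  have D: "M$$(Suc 0,0) = d" "M$$(Suc 0, Suc 0) = e" "M$$(Suc 0,2) = f" "M$$(0,Suc 0) = b" "M$$(2,Suc 0) = h"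
    by (simp_all add: d_def e_def f_def b_def h_def)
  note S = D sum5 lm_entry assms(1) a_def[symmetric] b_def[symmetric] c_def[symmetric] d_def[symmetric]
    e_def[symmetric] f_def[symmetric] g_def[symmetric] h_def[symmetric] k_def[symmetric]
  have e1: "c*a = c" using E[of 0 2] assms(1) by (simp add: S)
  have e2: "c*c = 0" using E[of 0 4] assms(1) by (simp add: S)
  have e3: "f*a = f" using E[of 1 2] assms(1) by (simp add: S)
  have e4: "f*b = 0" using E[of 1 3] assms(1) by (simp add: S)
  have e5: "g = a*g" using E[of 2 0] assms(1) by (simp add: S)
  have e6: "h = a*h" using E[of 2 1] assms(1) by (simp add: S)
  have e7: "k*b = b" using E[of 2 3] assms(1) by (simp add: S)
  have e8: "d*h = 0" using E[of 3 1] assms(1) by (simp add: S)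
  have e9: "d = d*k" using E[of 3 2] assms(1) by (simp add: S)
  have e10: "g*g = 0" using E[of 4 0] assms(1) by (simp add: S)
  have f1: "a*a+b*d+c*g = 1" using F[of 0 0] assms(1) by (simp add: S)
  have f2: "a*b+b*e+c*h = 0" using F[of 0 1] assms(1) by (simp add: S)
  have f3: "a*c+b*f+c*k = 0" using F[of 0 2] assms(1) by (simp add: S)
  have f4: "d*a+e*d+f*g = 0" using F[of 1 0] assms(1) by (simp add: S)
  have f5: "d*b+e*e+f*h = 1" using F[of 1 1] assms(1) by (simp add: S)
  have f6: "d*c+e*f+f*k = 0" using F[of 1 2] assms(1) by (simp add: S)
  have f7: "g*a+h*d+k*g = 0" using F[of 2 0] assms(1) by (simp add: S)
  have f8: "g*b+h*e+k*h = 0" using F[of 2 1] assms(1) by (simp add: S)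
  have f9: "g*c+h*f+k*k = 1" using F[of 2 2] assms(1) by (simp add: S)
  show ?thesis using e1 e2 e3 e4 e5 e6 e7 e8 e9 e10 f1 f2 f3 f4 f5 f6 f7 f8 f9 by simp
qed


lemma sq_cases: "(e::complex) * e = z \<Longrightarrow> e = csqrt z \<or> e = - csqrt z"
proof -
  assume "e * e = z"
  then have "(e - csqrt z) * (e + csqrt z) = 0"
    by (simp add: algebra_simps power2_eq_square[symmetric])
  then show ?thesis by (auto simp: add_eq_0_iff)
qed

lemma wit: "j \<in> {1..11} \<Longrightarrow> A = twinM j x y \<Longrightarrow> \<exists>j\<in>{1..11}. \<exists>x y. A = twinM j x y"
  by blast

lemma classify:
  fixes a b d e f h k :: complex
  assumes "f*a = f" "f*b = 0" "h = a*h" "k*b = b" "d*h = 0" "d = d*k"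
    "a*a+b*d = 1" "a*b+b*e = 0" "b*f = 0"
    "d*a+e*d = 0" "d*b+e*e+f*h = 1" "e*f+f*k = 0"
    "h*d = 0" "h*e+k*h = 0" "h*f+k*k = 1"
  shows "\<exists>j\<in>{1..11}. \<exists>x y. mat_of_rows_list 3 [[a,b,0],[d,e,f],[0,h,k]] = twinM j x y"
proof (cases "a = 1")
  case False
  have f0: "f = 0" using assms(1) False by (metis mult.right_neutral mult_left_cancel)
  have h0: "h = 0" using assms(3) False by (metis mult.commute mult.right_neutral mult_left_cancel)
  show ?thesis
  proof (cases "k = 1")
    case False
    have b0: "b = 0" using assms(4) False by (metis mult.right_neutral mult_cancel_right1 mult.commute)
    have d0: "d = 0" using assms(6) False by (metis mult.right_neutral mult_left_cancel)
    have "a*a = 1" using assms(7) b0 by simp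
    then have am: "a = -1" using \<open>a \<noteq> 1\<close> by (metis square_eq_1_iff power2_eq_square)
    have "k*k = 1" using assms(15) h0 by simp
    then have km: "k = -1" using \<open>k \<noteq> 1\<close> by (metis square_eq_1_iff power2_eq_square)
    have "e*e = 1" using assms(11) b0 f0 by simp
    then have "e = 1 \<or> e = -1" by (metis square_eq_1_iff power2_eq_square)
    then show ?thesis
    proof
      assume "e = 1" then show ?thesis
        by (intro wit[of 11]) (simp_all add: twinM_def am km b0 d0 f0 h0)
    next
      assume "e = -1" then show ?thesis
        by (intro wit[of 10]) (simp_all add: twinM_def am km b0 d0 f0 h0)
    qed
  next
    case k1: True
    show ?thesis
    proof (cases "a + e = 0")
      case True
      have ee: "e = -a" using True by (simp add: add_eq_0_iff)
      have "a * a = 1 - b*d" using assms(7) by (simp add: algebra_simps)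
      then have "a = csqrt (1-b*d) \<or> a = - csqrt (1-b*d)" by (rule sq_cases)
      then show ?thesis
      proof
        assume aa: "a = csqrt (1-b*d)" show ?thesis
          by (intro wit[of 6 _ b d]) (simp_all add: twinM_def aa ee k1 f0 h0)
      next
        assume aa: "a = - csqrt (1-b*d)" show ?thesis
          by (intro wit[of 5 _ b d]) (simp_all add: twinM_def aa ee k1 f0 h0)
      qed
    next
      case False
      have b0: "b = 0" using assms(8) False by (metis distrib_left mult.commute mult_eq_0_iff)
      have d0: "d = 0" using assms(10) False by (metis distrib_left mult.commute mult_eq_0_iff)
      have "a*a = 1" using assms(7) b0 by simp
      then have am: "a = -1" using \<open>a \<noteq> 1\<close> by (metis square_eq_1_iff power2_eq_square)
      have "e*e = 1" using assms(11) b0 f0 by simp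
      then have "e = 1 \<or> e = -1" by (metis square_eq_1_iff power2_eq_square)
      then have em: "e = -1" using False am by auto
      show ?thesis
        by (intro wit[of 8]) (simp_all add: twinM_def am em k1 b0 d0 f0 h0)
    qed
  qed
next
  case a1: True
  show ?thesis
  proof (cases "b = 0")
    case False
    have d0: "d = 0" using assms(7) a1 False by simp
    have em: "e = -1" using assms(8) a1 False
      by (metis add_eq_0_iff distrib_left mult.commute mult_eq_0_iff mult.right_neutral)
    have k1: "k = 1" using assms(4) False by (metis mult_cancel_right1)
    have f0: "f = 0" using assms(2) False by simp
    show ?thesis
      by (intro wit[of 4 _ b h]) (simp_all add: twinM_def a1 d0 em k1 f0)
  next
    case b0: True
    show ?thesis
    proof (cases "d = 0")
      case False
      have h0: "h = 0" using assms(5) False by simp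
      have k1: "k = 1" using assms(6) False by (metis mult_cancel_left1)
      have em: "e = -1" using assms(10) a1 False
        by (metis add_eq_0_iff distrib_left mult.commute mult_eq_0_iff mult.right_neutral)
      show ?thesis
        by (intro wit[of 1 _ d f]) (simp_all add: twinM_def a1 b0 h0 em k1)
    next
      case d0: True
      show ?thesis
      proof (cases "e + k = 0")
        case True
        have kk: "k = -e" using True by (simp add: add_eq_0_iff)
        have "e * e = 1 - f*h" using assms(11) d0 by (simp add: algebra_simps)
        then have "e = csqrt (1-f*h) \<or> e = - csqrt (1-f*h)" by (rule sq_cases)
        then show ?thesis
        proof
          assume ee: "e = csqrt (1-f*h)" show ?thesis
            by (intro wit[of 3 _ h f]) (simp_all add: twinM_def ee kk a1 b0 d0 mult.commute)
        next
          assume ee: "e = - csqrt (1-f*h)" show ?thesis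
            by (intro wit[of 2 _ h f]) (simp_all add: twinM_def ee kk a1 b0 d0 mult.commute)
        qed
      next
        case False
        have f0: "f = 0" using assms(12) False by (metis distrib_left mult.commute mult_eq_0_iff)
        have h0: "h = 0" using assms(14) False by (metis distrib_left mult.commute mult_eq_0_iff)
        have "e*e = 1" using assms(11) d0 f0 by simp
        then have e1: "e = 1 \<or> e = -1" by (metis square_eq_1_iff power2_eq_square)
        have "k*k = 1" using assms(15) h0 by simp
        then have k1: "k = 1 \<or> k = -1" by (metis square_eq_1_iff power2_eq_square)
        have "e = k" using e1 k1 False by auto
        with e1 show ?thesis
        proof (elim disjE)
          assume "e = 1" "e = k" then show ?thesis
            by (intro wit[of 9]) (simp_all add: twinM_def a1 b0 d0 f0 h0)
        next
          assume "e = -1" "e = k" then show ?thesis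
            by (intro wit[of 7]) (simp_all add: twinM_def a1 b0 d0 f0 h0)
        qed
      qed
    qed
  qed
qed

theorem theorem3p1:
  fixes n :: nat and M :: "complex mat"
  assumes "n \<ge> 4"
    and "homog_3local_rep n M"
  shows "\<exists>j\<in>{1..11}. \<exists>x y :: complex. \<exists>P Q.
           P \<in> carrier_mat (n+1) (n+1) \<and> Q \<in> carrier_mat (n+1) (n+1) \<and>
           P * Q = 1\<^sub>m (n+1) \<and> Q * P = 1\<^sub>m (n+1) \<and>
           (\<forall>i\<in>{1..n-1}. local_mat n M i = P * local_mat n (twinM j x y) i * Q)"
proof -
  have C: "M \<in> carrier_mat 3 3" using assms(2) by (simp add: homog_3local_rep_def)
  note E = eqs[OF assms]
  have "M = mat_of_rows_list 3 [[M$$(0,0),M$$(0,1),0],[M$$(1,0),M$$(1,1),M$$(1,2)],[0,M$$(2,1),M$$(2,2)]]"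
    using mat3_eq[OF C] E by simp
  moreover have "\<exists>j\<in>{1..11}. \<exists>x y. mat_of_rows_list 3 [[M$$(0,0),M$$(0,1),0],[M$$(1,0),M$$(1,1),M$$(1,2)],[0,M$$(2,1),M$$(2,2)]] = twinM j x y"
    apply (rule classify)
    using E by (auto simp: algebra_simps)
  ultimately obtain j x y where j: "j \<in> {1..11}" and Mj: "M = twinM j x y" by metis
  have I: "local_mat n M i = 1\<^sub>m (n+1) * local_mat n (twinM j x y) i * 1\<^sub>m (n+1)" for i
  proof -
    have Ci: "local_mat n M i \<in> carrier_mat (n+1) (n+1)" by (rule lm_carrier)
    have "1\<^sub>m (n+1) * local_mat n M i * 1\<^sub>m (n+1) = local_mat n M i"
      using left_mult_one_mat[OF Ci] right_mult_one_mat[OF Ci] by simp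
    then show ?thesis using Mj by simp
  qed
  have o1: "1\<^sub>m (n+1) \<in> carrier_mat (n+1) (n+1)" by simp
  have o2: "1\<^sub>m (n+1) * 1\<^sub>m (n+1) = (1\<^sub>m (n+1) :: complex mat)" by simp
  show ?thesis
    using j I o1 o2 by blast
qed

end
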